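(* Let $G$ be a graph, $X\subseteq V(G)$ a set such that $F := G-X$ is a pseudoforest, and $k$ an integer. If $G$ has an independent set of size at least $k$, then $G$ has an independent set $I$ with $|I|\ge k$ that contains no unnecessary triple, i.e. there is no unnecessary triple ${}_3X\subseteq X$ with ${}_3X \subseteq I$.
   Context: All graphs are finite, simple and undirected; a pseudoforest is a graph each of whose connected components contains at most one cycle. An anchor triangle is a connected component $P$ of $F=G-X$ with $V(P)=\{p_1,p_2,p_3\}$ such that there are vertices $x_1,x_2,x_3\in X$ with $N_G(p_1)=\{p_2,p_3,x_1\}$, $N_G(p_2)=\{p_1,p_3,x_2\}$, $N_G(p_3)=\{p_1,p_2,x_3\}$. A triple (3-element set) ${}_3X\subseteq X$ is unnecessary if there exists an anchor triangle $P$ with $N_G(V(P)) = {}_3X$, where $N_G(S)$ denotes the set of vertices outside $S$ adjacent to some vertex of $S$. *)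

theory Defs
  imports Main
begin

definition graph :: "'a set \<Rightarrow> ('a \<Rightarrow> 'a \<Rightarrow> bool) \<Rightarrow> bool" where
  "graph V E \<longleftrightarrow> finite V \<and> (\<forall>x y. E x y \<longrightarrow> x \<in> V \<and> y \<in> V)
     \<and> (\<forall>x y. E x y \<longrightarrow> E y x) \<and> (\<forall>x. \<not> E x x)"

definition nbhd :: "('a \<Rightarrow> 'a \<Rightarrow> bool) \<Rightarrow> 'a \<Rightarrow> 'a set" where
  "nbhd E v = {u. E v u}"

definition set_nbhd :: "('a \<Rightarrow> 'a \<Rightarrow> bool) \<Rightarrow> 'a set \<Rightarrow> 'a set" where
  "set_nbhd E S = {u. u \<notin> S \<and> (\<exists>v\<in>S. E v u)}"

definition induced :: "('a \<Rightarrow> 'a \<Rightarrow> bool) \<Rightarrow> 'a set \<Rightarrow> 'a \<Rightarrow> 'a \<Rightarrow> bool" where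
  "induced E W = (\<lambda>x y. x \<in> W \<and> y \<in> W \<and> E x y)"

definition components :: "'a set \<Rightarrow> ('a \<Rightarrow> 'a \<Rightarrow> bool) \<Rightarrow> 'a set set" where
  "components W E = (\<lambda>v. {u \<in> W. (induced E W)\<^sup>*\<^sup>* v u}) ` W"

definition is_cycle :: "'a set \<Rightarrow> ('a \<Rightarrow> 'a \<Rightarrow> bool) \<Rightarrow> 'a list \<Rightarrow> bool" where
  "is_cycle C E cs \<longleftrightarrow> length cs \<ge> 3 \<and> distinct cs \<and> set cs \<subseteq> C
     \<and> (\<forall>i < length cs. E (cs ! i) (cs ! ((i + 1) mod length cs)))"

definition cycle_edges :: "'a list \<Rightarrow> 'a set set" where
  "cycle_edges cs = {{cs ! i, cs ! ((i + 1) mod length cs)} | i. i < length cs}"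

text \<open>Pseudoforest: every connected component contains at most one cycle
(cycles identified by their edge sets).\<close>
definition pseudoforest :: "'a set \<Rightarrow> ('a \<Rightarrow> 'a \<Rightarrow> bool) \<Rightarrow> bool" where
  "pseudoforest W E \<longleftrightarrow> (\<forall>C \<in> components W E. \<forall>cs ds.
      is_cycle C E cs \<and> is_cycle C E ds \<longrightarrow> cycle_edges cs = cycle_edges ds)"

definition anchor_triangle ::
  "'a set \<Rightarrow> ('a \<Rightarrow> 'a \<Rightarrow> bool) \<Rightarrow> 'a set \<Rightarrow> 'a set \<Rightarrow> bool" where
  "anchor_triangle V E X P \<longleftrightarrow> P \<in> components (V - X) E \<and>
     (\<exists>p1 p2 p3 x1 x2 x3. P = {p1, p2, p3} \<and> p1 \<noteq> p2 \<and> p1 \<noteq> p3 \<and> p2 \<noteq> p3 \<and>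
        x1 \<in> X \<and> x2 \<in> X \<and> x3 \<in> X \<and>
        nbhd E p1 = {p2, p3, x1} \<and> nbhd E p2 = {p1, p3, x2} \<and> nbhd E p3 = {p1, p2, x3})"

definition unnecessary_triple ::
  "'a set \<Rightarrow> ('a \<Rightarrow> 'a \<Rightarrow> bool) \<Rightarrow> 'a set \<Rightarrow> 'a set \<Rightarrow> bool" where
  "unnecessary_triple V E X T \<longleftrightarrow> T \<subseteq> X \<and> card T = 3 \<and>
     (\<exists>P. anchor_triangle V E X P \<and> set_nbhd E P = T)"

definition independent_set :: "'a set \<Rightarrow> ('a \<Rightarrow> 'a \<Rightarrow> bool) \<Rightarrow> 'a set \<Rightarrow> bool" where
  "independent_set V E I \<longleftrightarrow> I \<subseteq> V \<and> (\<forall>x\<in>I. \<forall>y\<in>I. \<not> E x y)"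

end

theory Submission
  imports Defs
begin

theorem lemma2:
  fixes V :: "'a set" and E :: "'a \<Rightarrow> 'a \<Rightarrow> bool" and X :: "'a set" and k :: int
  assumes "graph V E"
    and "X \<subseteq> V"
    and "pseudoforest (V - X) E"
    and "\<exists>I. independent_set V E I \<and> int (card I) \<ge> k"
  shows "\<exists>I. independent_set V E I \<and> int (card I) \<ge> k \<and>
           \<not> (\<exists>T. unnecessary_triple V E X T \<and> T \<subseteq> I)"
proof -
  define Q where "Q = (\<lambda>I. independent_set V E I \<and> int (card I) \<ge> k)"
  obtain I0 where "Q I0" using assms(4) Q_def by blast
  define I where "I = arg_min (\<lambda>I. card (I \<inter> X)) Q"
  have QI: "Q I" and minI: "\<And>J. Q J \<Longrightarrow> card (I \<inter> X) \<le> card (J \<inter> X)"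
    using arg_min_nat_lemma[of Q I0 "\<lambda>I. card (I \<inter> X)"] \<open>Q I0\<close> I_def by auto
  have finV: "finite V" and sym: "\<And>x y. E x y \<Longrightarrow> E y x"
    using assms(1) unfolding graph_def by auto
  have ind: "I \<subseteq> V" "\<And>x y. x \<in> I \<Longrightarrow> y \<in> I \<Longrightarrow> \<not> E x y"
    using QI unfolding Q_def independent_set_def by auto
  have finI: "finite I" using ind(1) finV finite_subset by blast
  show ?thesis
  proof (rule exI[of _ I], intro conjI)
    show "independent_set V E I" "int (card I) \<ge> k" using QI Q_def by auto
    show "\<not> (\<exists>T. unnecessary_triple V E X T \<and> T \<subseteq> I)"
    proof
      assume "\<exists>T. unnecessary_triple V E X T \<and> T \<subseteq> I"
      then obtain T P where TI: "T \<subseteq> I" and at: "anchor_triangle V E X P"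
        and TP: "set_nbhd E P = T"
        unfolding unnecessary_triple_def by blast
      from at obtain p1 p2 p3 x1 where Pc: "P \<in> components (V - X) E" and
        P: "P = {p1, p2, p3}" and x1: "x1 \<in> X" and n1: "nbhd E p1 = {p2, p3, x1}"
        and n2: "\<exists>x2\<in>X. nbhd E p2 = {p1, p3, x2}" and n3: "\<exists>x3\<in>X. nbhd E p3 = {p1, p2, x3}"
        unfolding anchor_triangle_def by blast
      have PV: "P \<subseteq> V - X" using Pc unfolding components_def by auto
      have inT: "\<And>p x. p \<in> P \<Longrightarrow> x \<in> X \<Longrightarrow> E p x \<Longrightarrow> x \<in> I"
        using TI TP PV unfolding set_nbhd_def by blast
      have E1: "E p1 x1" using n1 unfolding nbhd_def by blast
      have x1I: "x1 \<in> I" using inT[OF _ x1 E1] P by auto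
      have p1I: "p1 \<notin> I" using ind(2)[OF _ x1I] E1 by blast
      have p2I: "p2 \<notin> I"
      proof -
        from n2 obtain x2 where "x2 \<in> X" "E p2 x2" unfolding nbhd_def by blast
        then have "x2 \<in> I" using inT P by auto
        thus ?thesis using ind(2) \<open>E p2 x2\<close> by blast
      qed
      have p3I: "p3 \<notin> I"
      proof -
        from n3 obtain x3 where "x3 \<in> X" "E p3 x3" unfolding nbhd_def by blast
        then have "x3 \<in> I" using inT P by auto
        thus ?thesis using ind(2) \<open>E p3 x3\<close> by blast
      qed
      have p1V: "p1 \<in> V" "p1 \<notin> X" using PV P by auto
      define J where "J = insert p1 (I - {x1})"
      have nE: "\<And>y. y \<in> J \<Longrightarrow> \<not> E p1 y"
      proof -
        fix y assume "y \<in> J"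
        show "\<not> E p1 y"
        proof
          assume "E p1 y"
          then have "y \<in> {p2, p3, x1}" using n1 unfolding nbhd_def by blast
          moreover have "y \<noteq> p1" using \<open>E p1 y\<close> assms(1) unfolding graph_def by auto
          ultimately show False using \<open>y \<in> J\<close> p2I p3I unfolding J_def by auto
        qed
      qed
      have indJ: "independent_set V E J"
        unfolding independent_set_def
      proof (intro conjI ballI)
        show "J \<subseteq> V" using ind(1) p1V unfolding J_def by auto
        fix x y assume "x \<in> J" "y \<in> J"
        show "\<not> E x y"
        proof (cases "x = p1")
          case True thus ?thesis using nE \<open>y \<in> J\<close> by blast
        next
          case False
          show ?thesis
          proof (cases "y = p1")
            case True thus ?thesis using nE[OF \<open>x \<in> J\<close>] sym by blast
          next
            case False
            thus ?thesis using \<open>x \<noteq> p1\<close> \<open>x \<in> J\<close> \<open>y \<in> J\<close> ind(2) unfolding J_def by auto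
          qed
        qed
      qed
      have "card J = card I"
        using finI x1I p1I unfolding J_def
        by (simp add: card_insert_if) (metis One_nat_def Suc_pred card_gt_0_iff empty_iff)
      hence QJ: "Q J" using indJ QI Q_def by auto
      have "J \<inter> X = (I \<inter> X) - {x1}" using p1V unfolding J_def by auto
      hence "card (J \<inter> X) < card (I \<inter> X)"
        using x1I x1 finI by (metis IntI card_Diff1_less finite_Int)
      thus False using minI[OF QJ] by simp
    qed
  qed
qed

end
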